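(* Let $\tau$ be an infinitesimal bending of an isometric immersion $f\colon M^n\to\mathbb{R}^{n+p}$. Then at every point of $M^n$ the bilinear form $\theta\colon TM\times TM\to N_fM\oplus N_fM$ defined by $$\theta(X,Y)=(\alpha(X,Y)+\beta(X,Y),\ \alpha(X,Y)-\beta(X,Y))$$ is flat with respect to the indefinite inner product $\langle\!\langle(\xi_1,\eta_1),(\xi_2,\eta_2)\rangle\!\rangle=\langle\xi_1,\xi_2\rangle-\langle\eta_1,\eta_2\rangle$ on $N_fM\oplus N_fM$.
   Context: $\alpha$ is the second fundamental form of $f$ and $N_fM$ its normal bundle. An infinitesimal bending of $f$ is a smooth map $\tau\colon M^n\to\mathbb{R}^{n+p}$ with $\langle f_*X,\tilde\nabla_X\tau\rangle=0$ for all tangent $X$, $\tilde\nabla$ the Euclidean connection. Set $LX=\tilde\nabla_X\tau$ and $B(X,Y)=\tilde\nabla_X(LY)-L\nabla_XY$; $\beta(X,Y)$ is the component of $B(X,Y)$ normal to $f$. A bilinear form $\mathcal{B}\colon V\times U\to W$ into a space with an (possibly indefinite) inner product is flat if $\langle\mathcal{B}(X,Z),\mathcal{B}(Y,W)\rangle-\langle\mathcal{B}(X,W),\mathcal{B}(Y,Z)\rangle=0$ for all $X,Y\in V$, $Z,W\in U$. *)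

theory Defs
  imports "HOL-Analysis.Analysis"
begin

text \<open>Local (chart) setting: the manifold M is an open set U of a Euclidean
  space 'a (dimension n = DIM('a)), the immersion is f :: 'a => 'b with
  'b of dimension n+p, and M carries the metric induced by f.\<close>

fun dder :: "'a::real_normed_vector list \<Rightarrow> ('a \<Rightarrow> 'b::real_normed_vector) \<Rightarrow> 'a \<Rightarrow> 'b" where
  "dder [] g = g"
| "dder (v # vs) g = (\<lambda>x. frechet_derivative (dder vs g) (at x) v)"

definition smooth_on :: "'a::real_normed_vector set \<Rightarrow> ('a \<Rightarrow> 'b::real_normed_vector) \<Rightarrow> bool" where
  "smooth_on U g \<longleftrightarrow> open U \<and> (\<forall>vs. dder vs g differentiable_on U)"

definition push :: "('a::real_normed_vector \<Rightarrow> 'b::real_normed_vector) \<Rightarrow> 'a \<Rightarrow> 'a \<Rightarrow> 'b" where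
  "push g x v = frechet_derivative g (at x) v"

definition d2 :: "('a::real_normed_vector \<Rightarrow> 'b::real_normed_vector) \<Rightarrow> 'a \<Rightarrow> 'a \<Rightarrow> 'a \<Rightarrow> 'b" where
  "d2 g x v w = frechet_derivative (\<lambda>y. frechet_derivative g (at y) w) (at x) v"

definition immersion_on :: "'a::euclidean_space set \<Rightarrow> ('a \<Rightarrow> 'b::euclidean_space) \<Rightarrow> bool" where
  "immersion_on U f \<longleftrightarrow> smooth_on U f \<and> (\<forall>x\<in>U. inj (push f x))"

definition nproj :: "('a::euclidean_space \<Rightarrow> 'b::euclidean_space) \<Rightarrow> 'a \<Rightarrow> 'b \<Rightarrow> 'b" where
  "nproj f x u = (THE n. (\<forall>t\<in>range (push f x). n \<bullet> t = 0) \<and> u - n \<in> range (push f x))"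

definition sff :: "('a::euclidean_space \<Rightarrow> 'b::euclidean_space) \<Rightarrow> 'a \<Rightarrow> 'a \<Rightarrow> 'a \<Rightarrow> 'b" where
  "sff f x v w = nproj f x (d2 f x v w)"

text \<open>Induced (Levi-Civita) connection, via the Gauss formula
  D_X f_* Y = f_* (nabla_X Y) + alpha(X,Y), applied to the coordinate-constant
  extension of w.\<close>
definition conn :: "('a::euclidean_space \<Rightarrow> 'b::euclidean_space) \<Rightarrow> 'a \<Rightarrow> 'a \<Rightarrow> 'a \<Rightarrow> 'a" where
  "conn f x v w = (THE u. push f x u = d2 f x v w - sff f x v w)"

definition infinitesimal_bending :: "'a::euclidean_space set \<Rightarrow> ('a \<Rightarrow> 'b::euclidean_space) \<Rightarrow> ('a \<Rightarrow> 'b) \<Rightarrow> bool" where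
  "infinitesimal_bending U f \<tau> \<longleftrightarrow> smooth_on U \<tau> \<and> (\<forall>x\<in>U. \<forall>v. push f x v \<bullet> push \<tau> x v = 0)"

definition Bform :: "('a::euclidean_space \<Rightarrow> 'b::euclidean_space) \<Rightarrow> ('a \<Rightarrow> 'b) \<Rightarrow> 'a \<Rightarrow> 'a \<Rightarrow> 'a \<Rightarrow> 'b" where
  "Bform f \<tau> x v w = d2 \<tau> x v w - push \<tau> x (conn f x v w)"

definition beta :: "('a::euclidean_space \<Rightarrow> 'b::euclidean_space) \<Rightarrow> ('a \<Rightarrow> 'b) \<Rightarrow> 'a \<Rightarrow> 'a \<Rightarrow> 'a \<Rightarrow> 'b" where
  "beta f \<tau> x v w = nproj f x (Bform f \<tau> x v w)"

definition flat :: "('w \<Rightarrow> 'w \<Rightarrow> real) \<Rightarrow> ('v \<Rightarrow> 'u \<Rightarrow> 'w) \<Rightarrow> bool" where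
  "flat ip B \<longleftrightarrow> (\<forall>X Y Z W. ip (B X Z) (B Y W) - ip (B X W) (B Y Z) = 0)"

definition split_ip :: "'b::real_inner \<times> 'b \<Rightarrow> 'b \<times> 'b \<Rightarrow> real" where
  "split_ip p q = fst p \<bullet> fst q - snd p \<bullet> snd q"

definition theta :: "('a::euclidean_space \<Rightarrow> 'b::euclidean_space) \<Rightarrow> ('a \<Rightarrow> 'b) \<Rightarrow> 'a \<Rightarrow> 'a \<Rightarrow> 'a \<Rightarrow> 'b \<times> 'b" where
  "theta f \<tau> x v w = (sff f x v w + beta f \<tau> x v w, sff f x v w - beta f \<tau> x v w)"

end

theory Submission
  imports Defs
begin

lemma delta_mvt:
  fixes G D1 D12 :: "'a::real_normed_vector \<Rightarrow> real"
  assumes h: "h > 0"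
    and sub: "cball x (h * (norm v + norm w)) \<subseteq> U"
    and d1: "\<And>y s. y + s *\<^sub>R v \<in> U \<Longrightarrow> ((\<lambda>s. G (y + s *\<^sub>R v)) has_real_derivative D1 (y + s *\<^sub>R v)) (at s)"
    and d12: "\<And>y t. y + t *\<^sub>R w \<in> U \<Longrightarrow> ((\<lambda>t. D1 (y + t *\<^sub>R w)) has_real_derivative D12 (y + t *\<^sub>R w)) (at t)"
  shows "\<exists>p. norm (p - x) \<le> h * (norm v + norm w) \<and>
     G (x + h *\<^sub>R v + h *\<^sub>R w) - G (x + h *\<^sub>R v) - G (x + h *\<^sub>R w) + G x = h * h * D12 p"
proof -
  have inU: "x + s *\<^sub>R v + t *\<^sub>R w \<in> U" if "0 \<le> s" "s \<le> h" "0 \<le> t" "t \<le> h" for s t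
  proof -
    have "norm (s *\<^sub>R v + t *\<^sub>R w) \<le> norm (s *\<^sub>R v) + norm (t *\<^sub>R w)" by (rule norm_triangle_ineq)
    also have "\<dots> = s * norm v + t * norm w" using that by simp
    also have "\<dots> \<le> h * norm v + h * norm w" using that by (intro add_mono mult_right_mono) auto
    moreover have "dist x (x + s *\<^sub>R v + t *\<^sub>R w) = norm (-(s *\<^sub>R v + t *\<^sub>R w))"
      by (simp add: dist_norm algebra_simps)
    ultimately have "dist x (x + s *\<^sub>R v + t *\<^sub>R w) \<le> h * (norm v + norm w)"
      by (simp only: norm_minus_cancel) (simp add: algebra_simps)
    then show ?thesis using sub by auto
  qed
  define phi where "phi s = G (x + h *\<^sub>R w + s *\<^sub>R v) - G (x + s *\<^sub>R v)" for s
  have "\<exists>z. 0 < z \<and> z < h \<and> phi h - phi 0 = (h - 0) * (D1 (x + h *\<^sub>R w + z *\<^sub>R v) - D1 (x + z *\<^sub>R v))"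
  proof (rule MVT2[OF h])
    fix s assume s: "0 \<le> s" "s \<le> h"
    have a: "x + h *\<^sub>R w + s *\<^sub>R v \<in> U" using inU[OF s, of h] h by (simp add: algebra_simps)
    have b: "x + s *\<^sub>R v \<in> U" using inU[OF s, of 0] h by simp
    show "(phi has_real_derivative (D1 (x + h *\<^sub>R w + s *\<^sub>R v) - D1 (x + s *\<^sub>R v))) (at s)"
      unfolding phi_def by (intro DERIV_diff d1 a b)
  qed
  then obtain z where z: "0 < z" "z < h" "phi h - phi 0 = h * (D1 (x + h *\<^sub>R w + z *\<^sub>R v) - D1 (x + z *\<^sub>R v))"
    by auto
  have "\<exists>t. 0 < t \<and> t < h \<and> D1 (x + z *\<^sub>R v + h *\<^sub>R w) - D1 (x + z *\<^sub>R v + 0 *\<^sub>R w) = (h - 0) * D12 (x + z *\<^sub>R v + t *\<^sub>R w)"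
  proof (rule MVT2[OF h, where f = "\<lambda>t. D1 (x + z *\<^sub>R v + t *\<^sub>R w)"])
    fix t assume t: "0 \<le> t" "t \<le> h"
    show "((\<lambda>t. D1 (x + z *\<^sub>R v + t *\<^sub>R w)) has_real_derivative D12 (x + z *\<^sub>R v + t *\<^sub>R w)) (at t)"
      using d12 inU[of z t] z t by simp
  qed
  then obtain t where t: "0 < t" "t < h" "D1 (x + z *\<^sub>R v + h *\<^sub>R w) - D1 (x + z *\<^sub>R v) = h * D12 (x + z *\<^sub>R v + t *\<^sub>R w)"
    by auto
  have "norm (z *\<^sub>R v + t *\<^sub>R w) \<le> norm (z *\<^sub>R v) + norm (t *\<^sub>R w)" by (rule norm_triangle_ineq)
  also have "\<dots> = z * norm v + t * norm w" using z t by simp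
  also have "\<dots> \<le> h * norm v + h * norm w" using z t by (intro add_mono mult_right_mono) auto
  finally have nrm: "norm ((x + z *\<^sub>R v + t *\<^sub>R w) - x) \<le> h * (norm v + norm w)"
    by (simp add: algebra_simps)
  have "G (x + h *\<^sub>R v + h *\<^sub>R w) - G (x + h *\<^sub>R v) - G (x + h *\<^sub>R w) + G x = phi h - phi 0"
    by (simp add: phi_def algebra_simps)
  also have "\<dots> = h * h * D12 (x + z *\<^sub>R v + t *\<^sub>R w)"
    using z(3) t(3) by (simp add: algebra_simps)
  finally show ?thesis using nrm by blast
qed

lemma schwarz_real:
  fixes G Dv Dw Dvw Dwv :: "'a::real_normed_vector \<Rightarrow> real"
  assumes U: "open U" "x \<in> U"
    and d1: "\<And>y s. y + s *\<^sub>R v \<in> U \<Longrightarrow> ((\<lambda>s. G (y + s *\<^sub>R v)) has_real_derivative Dv (y + s *\<^sub>R v)) (at s)"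
    and d12: "\<And>y t. y + t *\<^sub>R w \<in> U \<Longrightarrow> ((\<lambda>t. Dv (y + t *\<^sub>R w)) has_real_derivative Dvw (y + t *\<^sub>R w)) (at t)"
    and d2: "\<And>y s. y + s *\<^sub>R w \<in> U \<Longrightarrow> ((\<lambda>s. G (y + s *\<^sub>R w)) has_real_derivative Dw (y + s *\<^sub>R w)) (at s)"
    and d21: "\<And>y t. y + t *\<^sub>R v \<in> U \<Longrightarrow> ((\<lambda>t. Dw (y + t *\<^sub>R v)) has_real_derivative Dwv (y + t *\<^sub>R v)) (at t)"
    and c12: "continuous (at x) Dvw" and c21: "continuous (at x) Dwv"
  shows "Dvw x = Dwv x"
proof (rule ccontr)
  assume ne: "Dvw x \<noteq> Dwv x"
  define e where "e = \<bar>Dvw x - Dwv x\<bar> / 2"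
  have e: "e > 0" using ne by (simp add: e_def)
  obtain d1 where dd1: "d1 > 0" "\<And>y. dist y x < d1 \<Longrightarrow> dist (Dvw y) (Dvw x) < e"
    using c12 e unfolding continuous_at_eps_delta by blast
  obtain d2 where dd2: "d2 > 0" "\<And>y. dist y x < d2 \<Longrightarrow> dist (Dwv y) (Dwv x) < e"
    using c21 e unfolding continuous_at_eps_delta by blast
  obtain r where r: "r > 0" "cball x r \<subseteq> U" using U open_contains_cball by blast
  define m where "m = min r (min d1 d2)"
  define M where "M = norm v + norm w + 1"
  have m: "m > 0" using r dd1 dd2 by (simp add: m_def)
  have M: "M > 0" unfolding M_def using norm_ge_zero[of v] norm_ge_zero[of w] by linarith
  define h where "h = m / (2 * M)"
  have h: "h > 0" using m M by (simp add: h_def)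
  have "h * (norm v + norm w) \<le> h * M" using h by (intro mult_left_mono) (auto simp: M_def)
  also have "h * M = m / 2" using M by (simp add: h_def)
  finally have hm: "h * (norm v + norm w) < m" using m by simp
  have sub: "cball x (h * (norm v + norm w)) \<subseteq> U"
    using r hm by (smt (verit, best) m_def mem_cball subset_iff)
  have sub': "cball x (h * (norm w + norm v)) \<subseteq> U" using sub by (simp add: add.commute)
  obtain p1 where p1: "norm (p1 - x) \<le> h * (norm v + norm w)"
    "G (x + h *\<^sub>R v + h *\<^sub>R w) - G (x + h *\<^sub>R v) - G (x + h *\<^sub>R w) + G x = h * h * Dvw p1"
    using delta_mvt[OF h sub d1 d12] by blast
  obtain p2 where p2: "norm (p2 - x) \<le> h * (norm w + norm v)"
    "G (x + h *\<^sub>R w + h *\<^sub>R v) - G (x + h *\<^sub>R w) - G (x + h *\<^sub>R v) + G x = h * h * Dwv p2"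
    using delta_mvt[OF h sub' d2 d21] by blast
  have "h * h * Dvw p1 = h * h * Dwv p2" using p1(2) p2(2) by (simp add: algebra_simps)
  then have eq: "Dvw p1 = Dwv p2" using h by simp
  have "dist p1 x < d1" using p1(1) hm by (simp add: dist_norm m_def)
  then have a: "dist (Dvw p1) (Dvw x) < e" by (rule dd1)
  have "dist p2 x < d2" using p2(1) hm by (simp add: dist_norm m_def add.commute)
  then have b: "dist (Dwv p2) (Dwv x) < e" by (rule dd2)
  show False using a b eq unfolding dist_real_def e_def using abs_triangle_ineq[of "Dvw x - Dvw p1" "Dwv p2 - Dwv x"] by (simp add: abs_minus_commute)
qed

lemma smooth_diff:
  assumes "smooth_on U g" "y \<in> U"
  shows "dder vs g differentiable (at y)"
  using assms differentiable_on_eq_differentiable_at unfolding smooth_on_def by blast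

lemma smooth_hasd:
  assumes "smooth_on U g" "y \<in> U"
  shows "(dder vs g has_derivative frechet_derivative (dder vs g) (at y)) (at y)"
  using smooth_diff[OF assms] frechet_derivative_works by blast

lemma smooth_lin:
  assumes "smooth_on U g" "y \<in> U"
  shows "linear (frechet_derivative (dder vs g) (at y))"
  using smooth_hasd[OF assms] has_derivative_linear by blast

lemma line_deriv:
  fixes g :: "'a::real_normed_vector \<Rightarrow> 'b::real_inner"
  assumes "g differentiable (at (y + s *\<^sub>R u))"
  shows "((\<lambda>s. g (y + s *\<^sub>R u) \<bullet> e) has_real_derivative (frechet_derivative g (at (y + s *\<^sub>R u)) u \<bullet> e)) (at s)"
proof -
  let ?g' = "frechet_derivative g (at (y + s *\<^sub>R u))"
  have g: "(g has_derivative ?g') (at (y + s *\<^sub>R u))" using assms frechet_derivative_works by blast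
  have lin: "linear ?g'" using g has_derivative_linear by blast
  have p: "((\<lambda>s. y + s *\<^sub>R u) has_derivative (\<lambda>t. t *\<^sub>R u)) (at s)"
    by (auto intro!: derivative_eq_intros)
  have c: "((\<lambda>s. g (y + s *\<^sub>R u)) has_derivative (\<lambda>t. ?g' (t *\<^sub>R u))) (at s)"
    using diff_chain_at[OF p g] by (simp add: o_def)
  have "((\<lambda>s. g (y + s *\<^sub>R u) \<bullet> e) has_derivative (\<lambda>t. ?g' (t *\<^sub>R u) \<bullet> e)) (at s)"
    by (rule bounded_linear.has_derivative[OF bounded_linear_inner_left c])
  moreover have "(\<lambda>t. ?g' (t *\<^sub>R u) \<bullet> e) = (*) (?g' u \<bullet> e)"
    using lin by (auto simp: linear_scale)
  ultimately show ?thesis by (simp add: has_field_derivative_def)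
qed

lemma dder_append: "dder vs (dder ws g) = dder (vs @ ws) g"
  by (induction vs) auto

lemma smooth_dder: "smooth_on U g \<Longrightarrow> smooth_on U (dder ws g)"
  unfolding smooth_on_def by (simp add: dder_append)

lemma schwarz:
  fixes g :: "'a::real_normed_vector \<Rightarrow> 'b::real_inner"
  assumes sm: "smooth_on U g" and y: "y \<in> U"
  shows "dder [v, w] g y = dder [w, v] g y"
proof -
  have U: "open U" using sm smooth_on_def by blast
  have *: "dder [w, v] g y \<bullet> e = dder [v, w] g y \<bullet> e" for e
  proof -
    have a: "((\<lambda>s. g (p + s *\<^sub>R v) \<bullet> e) has_real_derivative dder [v] g (p + s *\<^sub>R v) \<bullet> e) (at s)"
      if "p + s *\<^sub>R v \<in> U" for p s
      using line_deriv[OF smooth_diff[OF sm that, of "[]"]] by simp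
    have b: "((\<lambda>s. g (p + s *\<^sub>R w) \<bullet> e) has_real_derivative dder [w] g (p + s *\<^sub>R w) \<bullet> e) (at s)"
      if "p + s *\<^sub>R w \<in> U" for p s
      using line_deriv[OF smooth_diff[OF sm that, of "[]"]] by simp
    have c: "((\<lambda>t. dder [v] g (p + t *\<^sub>R w) \<bullet> e) has_real_derivative dder [w, v] g (p + t *\<^sub>R w) \<bullet> e) (at t)"
      if "p + t *\<^sub>R w \<in> U" for p t
      using line_deriv[OF smooth_diff[OF sm that, of "[v]"]] by simp
    have d: "((\<lambda>t. dder [w] g (p + t *\<^sub>R v) \<bullet> e) has_real_derivative dder [v, w] g (p + t *\<^sub>R v) \<bullet> e) (at t)"
      if "p + t *\<^sub>R v \<in> U" for p t
      using line_deriv[OF smooth_diff[OF sm that, of "[w]"]] by simp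
    have e1: "continuous (at y) (\<lambda>y. dder [w, v] g y \<bullet> e)"
      using differentiable_imp_continuous_within[where s=UNIV, OF smooth_diff[OF sm y, of "[w,v]"]]
      by (intro continuous_intros)
    have e2: "continuous (at y) (\<lambda>y. dder [v, w] g y \<bullet> e)"
      using differentiable_imp_continuous_within[where s=UNIV, OF smooth_diff[OF sm y, of "[v,w]"]]
      by (intro continuous_intros)
    show ?thesis
      using schwarz_real[OF U y, where G = "\<lambda>y. g y \<bullet> e" and Dv = "\<lambda>y. dder [v] g y \<bullet> e"
        and Dw = "\<lambda>y. dder [w] g y \<bullet> e" and Dvw = "\<lambda>y. dder [w, v] g y \<bullet> e"
        and Dwv = "\<lambda>y. dder [v, w] g y \<bullet> e" and v = v and w = w, OF a c b d e1 e2] by simp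
  qed
  have "(dder [v, w] g y - dder [w, v] g y) \<bullet> (dder [v, w] g y - dder [w, v] g y) = 0"
    using *[of "dder [v, w] g y - dder [w, v] g y"] by (simp add: inner_diff_left)
  then show ?thesis by simp
qed

lemma push_dder: "push g y u = dder [u] g y"
  by (simp add: push_def)

lemma d2_dder: "d2 g y a b = dder [a, b] g y"
  by (simp add: d2_def)

lemma deriv_zero_on:
  assumes "(H has_derivative H') (at y)" "open U" "y \<in> U" "\<And>z. z \<in> U \<Longrightarrow> H z = 0"
  shows "H' k = 0"
proof -
  have "((\<lambda>_. 0) has_derivative H') (at y)"
    by (rule has_derivative_transform_within_open[OF assms(1) assms(2) assms(3)]) (simp add: assms(4))
  moreover have "((\<lambda>_. 0) has_derivative (\<lambda>_. 0)) (at y)" by simp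
  ultimately have "H' = (\<lambda>_. 0)" using has_derivative_unique by blast
  then show ?thesis by simp
qed

lemma dder_local:
  assumes sm: "smooth_on U g" and y: "y \<in> U" and eq: "\<And>z. z \<in> U \<Longrightarrow> dder p g z = dder q g z"
  shows "dder (k # p) g y = dder (k # q) g y"
proof -
  have U: "open U" using sm smooth_on_def by blast
  have "(dder q g has_derivative frechet_derivative (dder p g) (at y)) (at y)"
    using has_derivative_transform_within_open[OF smooth_hasd[OF sm y, of p] U y] eq by blast
  then have "frechet_derivative (dder p g) (at y) = frechet_derivative (dder q g) (at y)"
    using smooth_hasd[OF sm y, of q] has_derivative_unique by blast
  then show ?thesis by simp
qed

lemma dzero:
  fixes f \<tau> :: "'a::real_normed_vector \<Rightarrow> 'b::real_inner"
  assumes sf: "smooth_on U f" and st: "smooth_on U \<tau>" and y: "y \<in> U"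
    and z: "\<And>z. z \<in> U \<Longrightarrow> dder p f z \<bullet> dder q \<tau> z + dder p \<tau> z \<bullet> dder q f z = 0"
  shows "dder (k # p) f y \<bullet> dder q \<tau> y + dder p f y \<bullet> dder (k # q) \<tau> y
       + dder (k # p) \<tau> y \<bullet> dder q f y + dder p \<tau> y \<bullet> dder (k # q) f y = 0"
proof -
  have U: "open U" using sf smooth_on_def by blast
  have "((\<lambda>z. dder p f z \<bullet> dder q \<tau> z + dder p \<tau> z \<bullet> dder q f z) has_derivative
     (\<lambda>h. (dder p f y \<bullet> frechet_derivative (dder q \<tau>) (at y) h + frechet_derivative (dder p f) (at y) h \<bullet> dder q \<tau> y)
       + (dder p \<tau> y \<bullet> frechet_derivative (dder q f) (at y) h + frechet_derivative (dder p \<tau>) (at y) h \<bullet> dder q f y))) (at y)"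
    by (intro has_derivative_add has_derivative_inner smooth_hasd[OF sf y] smooth_hasd[OF st y])
  from deriv_zero_on[OF this U y z, of k] show ?thesis by (simp add: algebra_simps)
qed

lemma dder3_sym:
  fixes g :: "'a::real_normed_vector \<Rightarrow> 'b::real_inner"
  assumes sm: "smooth_on U g" and y: "y \<in> U"
  shows "dder [k, j, l] g y = dder [l, j, k] g y"
proof -
  have "dder [k, j, l] g y = dder [k, l, j] g y"
    using dder_local[OF sm y, of "[j,l]" "[l,j]" k] schwarz[OF sm] by blast
  also have "\<dots> = dder [k, l] (dder [j] g) y" by (simp add: dder_append)
  also have "\<dots> = dder [l, k] (dder [j] g) y" by (rule schwarz[OF smooth_dder[OF sm] y])
  also have "\<dots> = dder [l, k, j] g y" by (simp add: dder_append)
  also have "\<dots> = dder [l, j, k] g y"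
    using dder_local[OF sm y, of "[k,j]" "[j,k]" l] schwarz[OF sm] by blast
  finally show ?thesis .
qed

lemma nproj_ex:
  fixes L :: "'a::euclidean_space \<Rightarrow> 'b::euclidean_space"
  assumes "linear L"
  shows "(\<forall>t\<in>range L. (THE n. (\<forall>t\<in>range L. n \<bullet> t = 0) \<and> u - n \<in> range L) \<bullet> t = 0)
     \<and> u - (THE n. (\<forall>t\<in>range L. n \<bullet> t = 0) \<and> u - n \<in> range L) \<in> range L"
proof -
  have sub: "subspace (range L)" using linear_subspace_image[OF assms subspace_UNIV] by simp
  obtain a b where ab: "a \<in> span (range L)" "\<And>w. w \<in> span (range L) \<Longrightarrow> orthogonal b w" "u = a + b"
    using orthogonal_subspace_decomp_exists by metis
  have sp: "span (range L) = range L" using sub span_eq_iff by blast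
  have ex: "(\<forall>t\<in>range L. b \<bullet> t = 0) \<and> u - b \<in> range L"
    using ab sp by (auto simp: orthogonal_def)
  have un: "n = b" if "(\<forall>t\<in>range L. n \<bullet> t = 0) \<and> u - n \<in> range L" for n
  proof -
    have d: "n - b \<in> range L"
      using subspace_diff[OF sub, of "u - b" "u - n"] ex that by (simp add: algebra_simps)
    have "(n - b) \<bullet> (n - b) = n \<bullet> (n - b) - b \<bullet> (n - b)" by (simp add: inner_diff_left)
    also have "\<dots> = 0" using d ex that by (metis diff_self rangeE)
    finally show ?thesis by simp
  qed
  have "(THE n. (\<forall>t\<in>range L. n \<bullet> t = 0) \<and> u - n \<in> range L) = b"
    using ex un by (rule the_equality)
  then show ?thesis using ex by simp
qed

theorem lemma13:
  fixes U :: "'a::euclidean_space set" and f \<tau> :: "'a \<Rightarrow> 'b::euclidean_space"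
  assumes "immersion_on U f"
    and "infinitesimal_bending U f \<tau>"
    and "x \<in> U"
  shows "flat split_ip (theta f \<tau> x)"
proof -
  have sf: "smooth_on U f" and injF: "inj (push f x)" using assms(1,3) unfolding immersion_on_def by auto
  have st: "smooth_on U \<tau>" and bend: "\<And>y v. y \<in> U \<Longrightarrow> push f y v \<bullet> push \<tau> y v = 0"
    using assms(2) unfolding infinitesimal_bending_def by auto
  have x: "x \<in> U" by fact
  have linf: "linear (push f y)" if "y \<in> U" for y
    using smooth_lin[OF sf that, of "[]"] by (simp add: push_def[abs_def])
  have lint: "linear (push \<tau> y)" if "y \<in> U" for y
    using smooth_lin[OF st that, of "[]"] by (simp add: push_def[abs_def])
  have h0: "push f y u \<bullet> push \<tau> y v + push \<tau> y u \<bullet> push f y v = 0" if y: "y \<in> U" for y u v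
  proof -
    have "0 = push f y (u + v) \<bullet> push \<tau> y (u + v)" using bend[OF y] by simp
    also have "\<dots> = push f y u \<bullet> push \<tau> y u + push f y v \<bullet> push \<tau> y v
        + (push f y u \<bullet> push \<tau> y v + push \<tau> y u \<bullet> push f y v)"
      using linear_add[OF linf[OF y]] linear_add[OF lint[OF y]]
      by (simp add: inner_add_left inner_add_right inner_commute)
    finally show ?thesis using bend[OF y] by simp
  qed
  have h0d: "dder [u] f y \<bullet> dder [v] \<tau> y + dder [u] \<tau> y \<bullet> dder [v] f y = 0" if y: "y \<in> U" for y u v
    using h0[OF y, of u v] by (simp add: push_dder)
  have c0: "dder [u] f y \<bullet> dder [v, w] \<tau> y + dder [u] \<tau> y \<bullet> dder [v, w] f y = 0" if y: "y \<in> U" for y u v w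
  proof -
    define K where "K a b c = dder [a] f y \<bullet> dder [b, c] \<tau> y + dder [a] \<tau> y \<bullet> dder [b, c] f y" for a b c
    have sym: "K a b c = K a c b" for a b c
      unfolding K_def using schwarz[OF sf y, of b c] schwarz[OF st y, of b c] by simp
    have E: "K a b c + K c b a = 0" for a b c
    proof -
      have "dder [b, a] f y \<bullet> dder [c] \<tau> y + dder [a] f y \<bullet> dder [b, c] \<tau> y
          + dder [b, a] \<tau> y \<bullet> dder [c] f y + dder [a] \<tau> y \<bullet> dder [b, c] f y = 0"
        using dzero[OF sf st y, of "[a]" "[c]" b] h0d by blast
      then show ?thesis unfolding K_def by (simp add: inner_commute algebra_simps)
    qed
    have "K u v w = 0"
      using E[of u v w] E[of v w u] E[of w u v] sym[of u v w] sym[of v w u] sym[of w u v]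
        E[of u w v] E[of v u w] E[of w v u]
      by linarith
    then show ?thesis by (simp add: K_def)
  qed
  have P0: "dder [i, k] f x \<bullet> dder [j, l] \<tau> x + dder [i, k] \<tau> x \<bullet> dder [j, l] f x
      - dder [i, l] f x \<bullet> dder [j, k] \<tau> x - dder [i, l] \<tau> x \<bullet> dder [j, k] f x = 0" for i j k l
  proof -
    have A: "dder [k, i] f x \<bullet> dder [j, l] \<tau> x + dder [i] f x \<bullet> dder [k, j, l] \<tau> x
       + dder [k, i] \<tau> x \<bullet> dder [j, l] f x + dder [i] \<tau> x \<bullet> dder [k, j, l] f x = 0"
      using dzero[OF sf st x, of "[i]" "[j,l]" k] c0 by blast
    have B: "dder [l, i] f x \<bullet> dder [j, k] \<tau> x + dder [i] f x \<bullet> dder [l, j, k] \<tau> x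
       + dder [l, i] \<tau> x \<bullet> dder [j, k] f x + dder [i] \<tau> x \<bullet> dder [l, j, k] f x = 0"
      using dzero[OF sf st x, of "[i]" "[j,k]" l] c0 by blast
    have s3: "dder [k, j, l] \<tau> x = dder [l, j, k] \<tau> x" "dder [k, j, l] f x = dder [l, j, k] f x"
      using dder3_sym[OF st x] dder3_sym[OF sf x] by auto
    have s2: "dder [k, i] f x = dder [i, k] f x" "dder [k, i] \<tau> x = dder [i, k] \<tau> x"
       "dder [l, i] f x = dder [i, l] f x" "dder [l, i] \<tau> x = dder [i, l] \<tau> x"
      using schwarz[OF sf x] schwarz[OF st x] by auto
    show ?thesis using A B s3 s2 by (simp add: algebra_simps)
  qed
  define Fp where "Fp = push f x"
  define Tp where "Tp = push \<tau> x"
  define F2 where "F2 a b = dder [a, b] f x" for a b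
  define T2 where "T2 a b = dder [a, b] \<tau> x" for a b
  define N where "N = nproj f x"
  have N: "\<And>u t. N u \<bullet> Fp t = 0" "\<And>u. u - N u \<in> range Fp"
    using nproj_ex[OF linf[OF x]] unfolding N_def nproj_def Fp_def by auto
  define al where "al a b = sff f x a b" for a b
  have al: "al a b = N (F2 a b)" for a b by (simp add: al_def sff_def N_def F2_def d2_dder)
  define G where "G a b = conn f x a b" for a b
  have G: "Fp (G a b) = F2 a b - al a b" for a b
  proof -
    obtain t where t: "F2 a b - N (F2 a b) = Fp t" using N(2) by blast
    have "Fp (THE u. Fp u = F2 a b - al a b) = F2 a b - al a b"
    proof (rule theI)
      show "Fp t = F2 a b - al a b" using t al by simp
      show "\<And>u. Fp u = F2 a b - al a b \<Longrightarrow> u = t" using t al injF unfolding Fp_def inj_def by metis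
    qed
    then show ?thesis by (simp add: G_def conn_def Fp_def[symmetric] F2_def d2_dder al_def)
  qed
  define Bf where "Bf a b = T2 a b - Tp (G a b)" for a b
  define be where "be a b = beta f \<tau> x a b" for a b
  have be: "be a b = N (Bf a b)" for a b
    by (simp add: be_def beta_def Bform_def N_def Bf_def T2_def d2_dder Tp_def G_def)
  have h: "Fp u \<bullet> Tp v + Tp u \<bullet> Fp v = 0" for u v using h0[OF x] by (simp add: Fp_def Tp_def)
  have c: "Fp u \<bullet> T2 v w + Tp u \<bullet> F2 v w = 0" for u v w
    using c0[OF x] by (simp add: Fp_def Tp_def F2_def T2_def push_dder)
  have P: "F2 i k \<bullet> T2 j l + T2 i k \<bullet> F2 j l - F2 i l \<bullet> T2 j k - T2 i l \<bullet> F2 j k = 0" for i j k l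
    using P0 by (simp add: F2_def T2_def)
  have alperp: "al a b \<bullet> Fp t = 0" for a b t using N al by simp
  have D: "Fp u \<bullet> Bf a b + Tp u \<bullet> al a b = 0" for u a b
  proof -
    have "Fp u \<bullet> Bf a b + Tp u \<bullet> al a b = (Fp u \<bullet> T2 a b + Tp u \<bullet> F2 a b) - (Fp u \<bullet> Tp (G a b) + Tp u \<bullet> Fp (G a b))"
      using G[of a b] by (simp add: Bf_def inner_diff_right)
    then show ?thesis using c h by simp
  qed
  have ab: "al a b \<bullet> Bf c d = al a b \<bullet> be c d" for a b c d
  proof -
    obtain t where t: "Bf c d - N (Bf c d) = Fp t" using N(2) by blast
    have "al a b \<bullet> Bf c d = al a b \<bullet> (Bf c d - N (Bf c d)) + al a b \<bullet> N (Bf c d)"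
      by (simp add: inner_diff_right)
    then show ?thesis using t alperp be by simp
  qed
  have key: "F2 a b \<bullet> T2 c d + T2 a b \<bullet> F2 c d = al a b \<bullet> be c d + be a b \<bullet> al c d" for a b c d
  proof -
    have e1: "F2 a b = Fp (G a b) + al a b" "F2 c d = Fp (G c d) + al c d" using G by (simp_all add: algebra_simps)
    have e2: "T2 a b = Tp (G a b) + Bf a b" "T2 c d = Tp (G c d) + Bf c d" by (simp_all add: Bf_def)
    have "F2 a b \<bullet> T2 c d + T2 a b \<bullet> F2 c d =
       (Fp (G a b) \<bullet> Tp (G c d) + Tp (G a b) \<bullet> Fp (G c d))
      + (Fp (G a b) \<bullet> Bf c d + Tp (G a b) \<bullet> al c d)
      + (Fp (G c d) \<bullet> Bf a b + Tp (G c d) \<bullet> al a b)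
      + al a b \<bullet> Bf c d + al c d \<bullet> Bf a b"
      unfolding e1 e2 by (simp add: inner_add_left inner_add_right inner_commute algebra_simps)
    also have "\<dots> = al a b \<bullet> be c d + be a b \<bullet> al c d"
      using h[of "G a b" "G c d"] D[of "G a b" c d] D[of "G c d" a b] ab[of a b c d] ab[of c d a b]
        inner_commute[of "al c d" "be a b"] by linarith
    finally show ?thesis .
  qed
  show ?thesis
    unfolding flat_def
  proof (intro allI)
    fix X Y Z W
    have th: "theta f \<tau> x a b = (al a b + be a b, al a b - be a b)" for a b
      by (simp add: theta_def al_def be_def)
    have sp: "split_ip (theta f \<tau> x a b) (theta f \<tau> x c d) = 2 * (al a b \<bullet> be c d + be a b \<bullet> al c d)" for a b c d
      unfolding th split_ip_def by (simp add: inner_add_left inner_add_right inner_diff_left inner_diff_right inner_commute algebra_simps)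
    show "split_ip (theta f \<tau> x X Z) (theta f \<tau> x Y W) - split_ip (theta f \<tau> x X W) (theta f \<tau> x Y Z) = 0"
      using P[of X Z Y W] key[of X Z Y W] key[of X W Y Z] sp by simp
  qed
qed

end
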